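(* Let $X_t$ be the random walk on a finite T-graph all of whose segments have length at most $L$. For $r\ge L$ and $X_0\in B(0,r)$, let $\tau_r$ be the first time $X_t$ exits $B(0,r)$ or reaches a boundary vertex. Then for all integers $n\ge1$, $\mathbb P(\tau_r\ge 18nr^2)\le 2^{-n}$.
   Context: A finite T-graph is a finite collection of pairwise disjoint open segments $S_i$ and points $x_j$ in $\mathbb C$ such that $(\cup S_i)\cup(\cup x_j)$ is closed and connected and every $x_j$ lies on the boundary of the unbounded component of its complement; the $x_j$ are boundary vertices. Vertices are all endpoints of segments; every non-boundary (interior) vertex $x$ lies in exactly one open segment $S$. The random walk on the T-graph is the continuous-time pure jump Markov process in which boundary vertices are absorbing and from an interior vertex $x\in S$, with $x^+,x^-$ the neighbouring vertices of $x$ on $\overline S$ on either side, it jumps to $x^\pm$ at rate $\frac{1}{|x^\pm-x|\,|x^+-x^-|}$. (This walk is a martingale and $\frac{d}{dt}\mathrm{Tr}\,\mathrm{Var}(X_t)=1$ before absorption.) *)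

theory Defs
  imports "HOL-Analysis.Analysis"
begin

text \<open>A T-graph is given by a set Segs of open segments in the complex plane and a set Bd of
  points (the boundary vertices).\<close>

definition is_open_seg :: "complex set \<Rightarrow> bool" where
  "is_open_seg S \<longleftrightarrow> (\<exists>a b. a \<noteq> b \<and> S = open_segment a b)"

definition tgraph_set :: "complex set set \<Rightarrow> complex set \<Rightarrow> complex set" where
  "tgraph_set Segs Bd = (\<Union>Segs) \<union> Bd"

definition tvertices :: "complex set set \<Rightarrow> complex set \<Rightarrow> complex set" where
  "tvertices Segs Bd = (\<Union>S\<in>Segs. closure S - S) \<union> Bd"

text \<open>In the plane the complement of a bounded set has exactly one unbounded component,
  which is the library notion outside.\<close>
definition T_graph :: "complex set set \<Rightarrow> complex set \<Rightarrow> bool" where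
  "T_graph Segs Bd \<longleftrightarrow>
     finite Segs \<and> finite Bd \<and>
     (\<forall>S\<in>Segs. is_open_seg S) \<and>
     pairwise disjnt Segs \<and>
     closed (tgraph_set Segs Bd) \<and> connected (tgraph_set Segs Bd) \<and>
     (\<forall>x\<in>Bd. x \<in> frontier (outside (tgraph_set Segs Bd))) \<and>
     (\<forall>x\<in>tvertices Segs Bd - Bd. \<exists>!S. S \<in> Segs \<and> x \<in> S)"

definition seg_of :: "complex set set \<Rightarrow> complex \<Rightarrow> complex set" where
  "seg_of Segs x = (THE S. S \<in> Segs \<and> x \<in> S)"

text \<open>The neighbours x+ and x- of an interior vertex x: the vertices on the closure of its
  segment with no vertex strictly between them and x.\<close>
definition nbrs :: "complex set set \<Rightarrow> complex set \<Rightarrow> complex \<Rightarrow> complex set" where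
  "nbrs Segs Bd x = {y \<in> tvertices Segs Bd \<inter> closure (seg_of Segs x).
       y \<noteq> x \<and> open_segment x y \<inter> tvertices Segs Bd = {}}"

text \<open>Jump rate from x to y: 1 / (|y - x| |x+ - x-|); boundary vertices are absorbing.\<close>
definition jump_rate :: "complex set set \<Rightarrow> complex set \<Rightarrow> complex \<Rightarrow> complex \<Rightarrow> real" where
  "jump_rate Segs Bd x y =
     (if x \<in> tvertices Segs Bd - Bd \<and> y \<in> nbrs Segs Bd x
      then 1 / (cmod (y - x) * diameter (nbrs Segs Bd x)) else 0)"

definition generator :: "complex set set \<Rightarrow> complex set \<Rightarrow> complex \<Rightarrow> complex \<Rightarrow> real" where
  "generator Segs Bd x y =
     (if x = y then - (\<Sum>z\<in>nbrs Segs Bd x. jump_rate Segs Bd x z) else jump_rate Segs Bd x y)"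

fun kpow :: "complex set \<Rightarrow> (complex \<Rightarrow> complex \<Rightarrow> real) \<Rightarrow> nat \<Rightarrow> complex \<Rightarrow> complex \<Rightarrow> real" where
  "kpow A Q 0 x y = (if x = y \<and> x \<in> A then 1 else 0)"
| "kpow A Q (Suc k) x y = (if x \<in> A then (\<Sum>z\<in>A. Q x z * kpow A Q k z y) else 0)"

text \<open>States where the walk has not yet been stopped: interior vertices in the open ball B(0,r).\<close>
definition alive_set :: "complex set set \<Rightarrow> complex set \<Rightarrow> real \<Rightarrow> complex set" where
  "alive_set Segs Bd r = (tvertices Segs Bd - Bd) \<inter> ball 0 r"

text \<open>P_x(tau_r >= t): by the Kolmogorov equations for the finite-state pure jump process,
  this is the row sum of exp(t Q_A) with Q_A the generator killed outside A.\<close>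
definition exit_tail :: "complex set set \<Rightarrow> complex set \<Rightarrow> real \<Rightarrow> real \<Rightarrow> complex \<Rightarrow> real" where
  "exit_tail Segs Bd r t x =
     (\<Sum>y\<in>alive_set Segs Bd r.
        (\<Sum>k. t ^ k / fact k * kpow (alive_set Segs Bd r) (generator Segs Bd) k x y))"

end

theory Submission
  imports Defs
begin


definition Ek :: "complex set \<Rightarrow> (complex \<Rightarrow> complex \<Rightarrow> real) \<Rightarrow> real \<Rightarrow> complex \<Rightarrow> complex \<Rightarrow> real" where
  "Ek A Q t x y = (\<Sum>k. t ^ k / fact k * kpow A Q k x y)"

lemma kpow_outL: "x \<notin> A \<Longrightarrow> kpow A Q k x y = 0"
  by (cases k) auto

lemma kpow_outR: "y \<notin> A \<Longrightarrow> kpow A Q k x y = 0"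
  by (induction k arbitrary: x) auto

lemma kpow_add:
  assumes "finite A"
  shows "kpow A Q (i + j) x y = (\<Sum>z\<in>A. kpow A Q i x z * kpow A Q j z y)"
proof (induction i arbitrary: x)
  case 0
  have "(\<Sum>z\<in>A. kpow A Q 0 x z * kpow A Q j z y) = (\<Sum>z\<in>A. if z = x then kpow A Q j x y else 0)"
    by (rule sum.cong) (auto simp: kpow_outL)
  then show ?case
    by (cases "x \<in> A") (auto simp: kpow_outL assms)
next
  case (Suc i)
  show ?case
  proof (cases "x \<in> A")
    case True
    have "kpow A Q (Suc i + j) x y = (\<Sum>w\<in>A. Q x w * (\<Sum>z\<in>A. kpow A Q i w z * kpow A Q j z y))"
      using True by (simp add: Suc.IH)
    also have "\<dots> = (\<Sum>w\<in>A. \<Sum>z\<in>A. Q x w * kpow A Q i w z * kpow A Q j z y)"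
      by (simp add: sum_distrib_left mult.assoc)
    also have "\<dots> = (\<Sum>z\<in>A. \<Sum>w\<in>A. Q x w * kpow A Q i w z * kpow A Q j z y)"
      by (rule sum.swap)
    also have "\<dots> = (\<Sum>z\<in>A. kpow A Q (Suc i) x z * kpow A Q j z y)"
      using True by (simp add: sum_distrib_right)
    finally show ?thesis .
  qed (simp add: kpow_outL)
qed

lemma kpow_bound:
  assumes "finite A" "\<And>x y. x \<in> A \<Longrightarrow> y \<in> A \<Longrightarrow> \<bar>Q x y\<bar> \<le> m" "0 \<le> m"
  shows "\<bar>kpow A Q k x y\<bar> \<le> (real (card A) * m) ^ k"
proof (induction k arbitrary: x)
  case 0
  then show ?case by auto
next
  case (Suc k)
  show ?case
  proof (cases "x \<in> A")
    case True
    have "\<bar>kpow A Q (Suc k) x y\<bar> \<le> (\<Sum>z\<in>A. \<bar>Q x z * kpow A Q k z y\<bar>)"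
      using True by (simp add: sum_abs)
    also have "\<dots> \<le> (\<Sum>z\<in>A. m * (real (card A) * m) ^ k)"
      by (intro sum_mono) (auto simp: abs_mult intro!: mult_mono Suc.IH assms True)
    also have "\<dots> = (real (card A) * m) ^ Suc k" by simp
    finally show ?thesis .
  qed (use assms in auto)
qed

lemma kpow_bound':
  assumes "finite A"
  obtains M where "0 \<le> M" "\<And>k x y. \<bar>kpow A Q k x y\<bar> \<le> M ^ k"
proof -
  define m where "m = (\<Sum>x\<in>A. \<Sum>y\<in>A. \<bar>Q x y\<bar>)"
  have "\<bar>Q x y\<bar> \<le> m" if "x \<in> A" "y \<in> A" for x y
  proof -
    have "\<bar>Q x y\<bar> \<le> (\<Sum>y\<in>A. \<bar>Q x y\<bar>)" by (rule member_le_sum) (use that assms in auto)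
    also have "\<dots> \<le> m" unfolding m_def by (rule member_le_sum[of x]) (use that assms in \<open>auto intro: sum_nonneg\<close>)
    finally show ?thesis .
  qed
  moreover have "0 \<le> m" unfolding m_def by (auto intro!: sum_nonneg)
  ultimately show ?thesis using kpow_bound[OF assms] that[of "real (card A) * m"] by auto
qed

lemma summable_expbound:
  fixes a :: "nat \<Rightarrow> real"
  assumes "\<And>k. \<bar>a k\<bar> \<le> C * B ^ k"
  shows "summable (\<lambda>k. \<bar>s ^ k / fact k * a k\<bar>)"
proof (rule summable_comparison_test)
  show "\<exists>N. \<forall>n\<ge>N. norm \<bar>s ^ n / fact n * a n\<bar> \<le> C * (inverse (fact n) * (\<bar>s\<bar> * B) ^ n)"
  proof (intro exI allI impI)
    fix n :: nat
    have "norm \<bar>s ^ n / fact n * a n\<bar> = \<bar>s\<bar> ^ n / fact n * \<bar>a n\<bar>"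
      by (simp add: abs_mult power_abs)
    also have "\<dots> \<le> \<bar>s\<bar> ^ n / fact n * (C * B ^ n)"
      by (intro mult_left_mono assms) auto
    also have "\<dots> = C * (inverse (fact n) * (\<bar>s\<bar> * B) ^ n)"
      by (simp add: power_mult_distrib field_simps)
    finally show "norm \<bar>s ^ n / fact n * a n\<bar> \<le> C * (inverse (fact n) * (\<bar>s\<bar> * B) ^ n)" .
  qed
  show "summable (\<lambda>n. C * (inverse (fact n) * (\<bar>s\<bar> * B) ^ n))"
    by (intro summable_mult summable_exp)
qed

lemma summable_E:
  assumes "finite A"
  shows "summable (\<lambda>k. \<bar>t ^ k / fact k * kpow A Q k x y\<bar>)"
proof -
  obtain M where "\<And>k x y. \<bar>kpow A Q k x y\<bar> \<le> M ^ k" using kpow_bound'[OF assms] by blast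
  then show ?thesis by (intro summable_expbound[where C=1 and B=M]) auto
qed



lemma sum_delta_mult:
  assumes "finite A" "x \<in> A"
  shows "(\<Sum>z\<in>A. (if x = z then c else 0) * f z) = c * (f x :: real)"
proof -
  have "(\<Sum>z\<in>A. (if x = z then c else 0) * f z) = (\<Sum>z\<in>A. if z = x then c * f x else 0)"
    by (rule sum.cong) auto
  then show ?thesis using assms by simp
qed

lemma E_add:
  assumes A: "finite A"
  shows "Ek A Q (s + t) x w = (\<Sum>y\<in>A. Ek A Q s x y * Ek A Q t y w)"
proof -
  define a where "a y i = s^i / fact i * kpow A Q i x y" for y i
  define b where "b y j = t^j / fact j * kpow A Q j y w" for y j
  have cp: "(\<lambda>k. \<Sum>i\<le>k. a y i * b y (k - i)) sums (Ek A Q s x y * Ek A Q t y w)" for y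
    unfolding Ek_def a_def b_def
    by (rule Cauchy_product_sums) (use summable_E[OF A] in \<open>auto simp: real_norm_def\<close>)
  have S: "(\<lambda>k. \<Sum>y\<in>A. \<Sum>i\<le>k. a y i * b y (k - i)) sums (\<Sum>y\<in>A. Ek A Q s x y * Ek A Q t y w)"
    by (rule sums_sum) (rule cp)
  have E: "(\<Sum>y\<in>A. \<Sum>i\<le>k. a y i * b y (k - i)) = (s+t)^k / fact k * kpow A Q k x w" for k
  proof -
    have "(\<Sum>y\<in>A. \<Sum>i\<le>k. a y i * b y (k - i)) = (\<Sum>i\<le>k. \<Sum>y\<in>A. a y i * b y (k - i))"
      by (rule sum.swap)
    also have "\<dots> = (\<Sum>i\<le>k. s^i * t^(k-i) / (fact i * fact (k-i)) * (\<Sum>y\<in>A. kpow A Q i x y * kpow A Q (k-i) y w))"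
      unfolding a_def b_def by (intro sum.cong refl) (simp add: sum_distrib_left mult_ac)
    also have "\<dots> = (\<Sum>i\<le>k. s^i * t^(k-i) / (fact i * fact (k-i)) * kpow A Q k x w)"
      by (intro sum.cong refl) (simp add: kpow_add[OF A, symmetric])
    also have "\<dots> = (\<Sum>i\<le>k. s^i * t^(k-i) / (fact i * fact (k-i))) * kpow A Q k x w"
      by (simp add: sum_distrib_right)
    also have "(\<Sum>i\<le>k. s^i * t^(k-i) / (fact i * fact (k-i))) = (s+t)^k / fact k"
    proof -
      have "(s+t)^k / fact k = (\<Sum>i\<le>k. of_nat (k choose i) * s^i * t^(k-i)) / fact k"
        by (simp add: binomial_ring)
      also have "\<dots> = (\<Sum>i\<le>k. of_nat (k choose i) * s^i * t^(k-i) / fact k)"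
        by (simp add: sum_divide_distrib)
      also have "\<dots> = (\<Sum>i\<le>k. s^i * t^(k-i) / (fact i * fact (k-i)))"
        by (intro sum.cong refl) (simp add: binomial_fact)
      finally show ?thesis by simp
    qed
    finally show ?thesis .
  qed
  show ?thesis
    using S unfolding E Ek_def by (simp add: sums_iff)
qed

lemma pascal_step:
  fixes f :: "nat \<Rightarrow> real"
  shows "(\<Sum>j\<le>k. of_nat (k choose j) * c^(k-j) * f (Suc j)) + (\<Sum>j\<le>k. of_nat (k choose j) * c^(Suc k-j) * f j)
       = (\<Sum>j\<le>Suc k. of_nat (Suc k choose j) * c^(Suc k-j) * f j)"
proof -
  have 1: "(\<Sum>j\<le>k. of_nat (k choose j) * c^(Suc k-j) * f j) = (\<Sum>j\<le>Suc k. of_nat (k choose j) * c^(Suc k-j) * f j)"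
    by simp
  have 2: "(\<Sum>j\<le>Suc k. of_nat (k choose j) * c^(Suc k-j) * f j) = c^Suc k * f 0 + (\<Sum>j\<le>k. of_nat (k choose Suc j) * c^(k-j) * f (Suc j))"
    by (subst sum.atMost_Suc_shift) simp
  have 3: "(\<Sum>j\<le>Suc k. of_nat (Suc k choose j) * c^(Suc k-j) * f j) = c^Suc k * f 0 + (\<Sum>j\<le>k. (of_nat (k choose j) + of_nat (k choose Suc j)) * c^(k-j) * f (Suc j))"
    by (subst sum.atMost_Suc_shift) simp
  show ?thesis unfolding 1 2 3 by (simp add: distrib_right sum.distrib)
qed

lemma kpow_shift:
  assumes A: "finite A"
  shows "kpow A (\<lambda>x y. Q x y + (if x = y then c else 0)) k x y = (\<Sum>j\<le>k. of_nat (k choose j) * c^(k-j) * kpow A Q j x y)"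
proof (induction k arbitrary: x)
  case 0
  then show ?case by simp
next
  case (Suc k)
  define B where "B = (\<lambda>x y. Q x y + (if x = y then c else 0))"
  show ?case
  proof (cases "x \<in> A")
    case False
    then show ?thesis by (simp add: kpow_outL)
  next
    case True
    have "kpow A B (Suc k) x y = (\<Sum>z\<in>A. (Q x z + (if x = z then c else 0)) * kpow A B k z y)"
      using True by (simp add: B_def)
    also have "\<dots> = (\<Sum>z\<in>A. Q x z * kpow A B k z y) + c * kpow A B k x y"
      using sum_delta_mult[OF A True, of c "\<lambda>z. kpow A B k z y"]
      by (simp add: distrib_right sum.distrib)
    also have "(\<Sum>z\<in>A. Q x z * kpow A B k z y) = (\<Sum>j\<le>k. of_nat (k choose j) * c^(k-j) * kpow A Q (Suc j) x y)"
    proof -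
      have "(\<Sum>z\<in>A. Q x z * kpow A B k z y) = (\<Sum>z\<in>A. \<Sum>j\<le>k. Q x z * (of_nat (k choose j) * c^(k-j) * kpow A Q j z y))"
        by (simp add: Suc.IH[unfolded B_def[symmetric]] sum_distrib_left)
      also have "\<dots> = (\<Sum>j\<le>k. \<Sum>z\<in>A. Q x z * (of_nat (k choose j) * c^(k-j) * kpow A Q j z y))"
        by (rule sum.swap)
      also have "\<dots> = (\<Sum>j\<le>k. of_nat (k choose j) * c^(k-j) * kpow A Q (Suc j) x y)"
        using True by (intro sum.cong refl) (simp add: sum_distrib_left mult_ac)
      finally show ?thesis .
    qed
    also have "c * kpow A B k x y = (\<Sum>j\<le>k. of_nat (k choose j) * c^(Suc k-j) * kpow A Q j x y)"
      by (simp add: Suc.IH[unfolded B_def[symmetric]] sum_distrib_left mult_ac Suc_diff_le)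
    finally show ?thesis
      using pascal_step[of k c "\<lambda>j. kpow A Q j x y"] by (simp add: B_def)
  qed
qed

lemma exp_sums_real: "(\<lambda>n. (z::real)^n / fact n) sums exp z"
  using exp_converges[of z] by (simp add: divide_inverse mult.commute)

lemma E_shift:
  assumes A: "finite A"
  shows "Ek A (\<lambda>x y. Q x y + (if x = y then c else 0)) t x y = Ek A Q t x y * exp (c*t)"
proof -
  define a where "a i = t^i / fact i * kpow A Q i x y" for i
  define b where "b j = (c*t)^j / fact j" for j
  have sb: "summable (\<lambda>k. \<bar>b k\<bar>)"
    using summable_expbound[of "\<lambda>_. 1" 1 1 "c*t"] unfolding b_def by simp
  have cp: "(\<lambda>k. \<Sum>i\<le>k. a i * b (k - i)) sums (Ek A Q t x y * exp (c*t))"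
  proof -
    have "(\<lambda>k. \<Sum>i\<le>k. a i * b (k - i)) sums (suminf a * suminf b)"
      by (rule Cauchy_product_sums) (use summable_E[OF A] sb in \<open>auto simp: real_norm_def a_def\<close>)
    moreover have "suminf b = exp (c*t)" unfolding b_def using exp_sums_real sums_unique by metis
    moreover have "suminf a = Ek A Q t x y" unfolding a_def Ek_def ..
    ultimately show ?thesis by simp
  qed
  have E: "(\<Sum>i\<le>k. a i * b (k - i)) = t^k / fact k * kpow A (\<lambda>x y. Q x y + (if x = y then c else 0)) k x y" for k
  proof -
    have "(\<Sum>i\<le>k. a i * b (k - i)) = (\<Sum>i\<le>k. t^k / fact k * (of_nat (k choose i) * c^(k-i) * kpow A Q i x y))"
    proof (intro sum.cong refl)
      fix i assume "i \<in> {..k}"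
      then have ik: "i \<le> k" by simp
      have tt: "t^i * t^(k-i) = t^k" using ik by (simp add: power_add[symmetric])
      show "a i * b (k - i) = t^k / fact k * (of_nat (k choose i) * c^(k-i) * kpow A Q i x y)"
        unfolding a_def b_def using ik
        by (simp add: binomial_fact power_mult_distrib tt[symmetric] field_simps)
    qed
    also have "\<dots> = t^k / fact k * kpow A (\<lambda>x y. Q x y + (if x = y then c else 0)) k x y"
      by (simp add: kpow_shift[OF A] sum_distrib_left)
    finally show ?thesis .
  qed
  show ?thesis using cp unfolding E Ek_def by (simp add: sums_iff)
qed

lemma kpow_nonneg:
  assumes "\<And>x y. x \<in> A \<Longrightarrow> y \<in> A \<Longrightarrow> 0 \<le> B x y"
  shows "0 \<le> kpow A B k x y"
  by (induction k arbitrary: x) (auto intro!: sum_nonneg mult_nonneg_nonneg assms)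

lemma E_nonneg:
  assumes A: "finite A" and Q: "\<And>x y. x \<in> A \<Longrightarrow> y \<in> A \<Longrightarrow> x \<noteq> y \<Longrightarrow> 0 \<le> Q x y" and t: "0 \<le> t"
  shows "0 \<le> Ek A Q t x y"
proof -
  define c where "c = (\<Sum>x\<in>A. \<bar>Q x x\<bar>)"
  have cx: "\<bar>Q x x\<bar> \<le> c" if "x \<in> A" for x
    unfolding c_def by (rule member_le_sum) (use that A in auto)
  define B where "B = (\<lambda>x y. Q x y + (if x = y then c else 0))"
  have B: "0 \<le> B x y" if "x \<in> A" "y \<in> A" for x y
    using Q[OF that] cx[OF that(1)] by (auto simp: B_def)
  have "0 \<le> Ek A B t x y"
    unfolding Ek_def
    by (rule suminf_nonneg)
       (use summable_rabs_cancel[OF summable_E[OF A]] t kpow_nonneg[OF B] in auto)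
  then have "0 \<le> Ek A Q t x y * exp (c*t)"
    using E_shift[OF A, of Q c t x y] by (simp add: B_def)
  then show ?thesis by (simp add: zero_le_mult_iff)
qed



definition ev :: "complex set \<Rightarrow> (complex \<Rightarrow> complex \<Rightarrow> real) \<Rightarrow> real \<Rightarrow> (complex \<Rightarrow> real) \<Rightarrow> complex \<Rightarrow> real" where
  "ev A Q t v x = (\<Sum>y\<in>A. Ek A Q t x y * v y)"

definition Qv :: "complex set \<Rightarrow> (complex \<Rightarrow> complex \<Rightarrow> real) \<Rightarrow> (complex \<Rightarrow> real) \<Rightarrow> complex \<Rightarrow> real" where
  "Qv A Q v z = (\<Sum>y\<in>A. Q z y * v y)"

definition pv :: "complex set \<Rightarrow> (complex \<Rightarrow> complex \<Rightarrow> real) \<Rightarrow> (complex \<Rightarrow> real) \<Rightarrow> complex \<Rightarrow> nat \<Rightarrow> real" where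
  "pv A Q v x k = (\<Sum>y\<in>A. kpow A Q k x y * v y)"

lemma pv_bound:
  assumes A: "finite A"
  obtains C M where "\<And>k. \<bar>pv A Q v x k\<bar> \<le> C * M ^ k"
proof -
  obtain M where M: "0 \<le> M" "\<And>k x y. \<bar>kpow A Q k x y\<bar> \<le> M ^ k" using kpow_bound'[OF A] by blast
  have "\<bar>pv A Q v x k\<bar> \<le> (\<Sum>y\<in>A. \<bar>v y\<bar>) * M ^ k" for k
  proof -
    have "\<bar>pv A Q v x k\<bar> \<le> (\<Sum>y\<in>A. \<bar>kpow A Q k x y * v y\<bar>)"
      unfolding pv_def by (rule sum_abs)
    also have "\<dots> \<le> (\<Sum>y\<in>A. \<bar>v y\<bar> * M ^ k)"
      by (intro sum_mono) (simp add: abs_mult mult.commute mult_left_mono M)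
    finally show ?thesis by (simp add: sum_distrib_right)
  qed
  then show ?thesis using that by blast
qed

lemma pv_summable:
  assumes A: "finite A"
  shows "summable (\<lambda>k. pv A Q v x k / fact k * s ^ k)"
proof -
  obtain C M where "\<And>k. \<bar>pv A Q v x k\<bar> \<le> C * M ^ k" using pv_bound[OF A] by blast
  from summable_expbound[of "pv A Q v x", OF this, of s]
  have "summable (\<lambda>k. s ^ k / fact k * pv A Q v x k)" by (rule summable_rabs_cancel)
  then show ?thesis by (simp add: mult_ac)
qed

lemma ev_series:
  assumes A: "finite A"
  shows "ev A Q t v x = (\<Sum>k. pv A Q v x k / fact k * t ^ k)"
proof -
  have sm: "summable (\<lambda>k. t ^ k / fact k * kpow A Q k x y)" for y
    using summable_rabs_cancel[OF summable_E[OF A]] .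
  have "ev A Q t v x = (\<Sum>y\<in>A. \<Sum>k. t ^ k / fact k * kpow A Q k x y * v y)"
    unfolding ev_def Ek_def by (intro sum.cong refl) (rule suminf_mult2[OF sm])
  also have "\<dots> = (\<Sum>k. \<Sum>y\<in>A. t ^ k / fact k * kpow A Q k x y * v y)"
    by (rule suminf_sum[symmetric]) (intro summable_mult2 sm)
  also have "\<dots> = (\<Sum>k. pv A Q v x k / fact k * t ^ k)"
    unfolding pv_def by (simp add: sum_distrib_left sum_divide_distrib sum_distrib_right mult_ac)
  finally show ?thesis .
qed

lemma kpow_one:
  assumes A: "finite A" and "z \<in> A" "y \<in> A"
  shows "kpow A Q (Suc 0) z y = Q z y"
proof -
  have "kpow A Q (Suc 0) z y = (\<Sum>w\<in>A. if w = y then Q z y else 0)"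
    using assms by (simp add: if_distrib cong: if_cong)
  then show ?thesis using assms by simp
qed

lemma pv_Suc:
  assumes A: "finite A"
  shows "pv A Q v x (Suc n) = pv A Q (Qv A Q v) x n"
proof -
  have "pv A Q v x (Suc n) = (\<Sum>y\<in>A. (\<Sum>z\<in>A. kpow A Q n x z * kpow A Q (Suc 0) z y) * v y)"
    unfolding pv_def using kpow_add[OF A, of Q n "Suc 0"] by simp
  also have "\<dots> = (\<Sum>y\<in>A. \<Sum>z\<in>A. kpow A Q n x z * (Q z y * v y))"
  proof (intro sum.cong refl)
    fix y assume y: "y \<in> A"
    have "(\<Sum>z\<in>A. kpow A Q n x z * kpow A Q (Suc 0) z y) * v y = (\<Sum>z\<in>A. kpow A Q n x z * kpow A Q (Suc 0) z y * v y)"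
      by (rule sum_distrib_right)
    also have "\<dots> = (\<Sum>z\<in>A. kpow A Q n x z * (Q z y * v y))"
      by (intro sum.cong refl) (simp add: kpow_one[OF A _ y] del: kpow.simps)
    finally show "(\<Sum>z\<in>A. kpow A Q n x z * kpow A Q (Suc 0) z y) * v y = (\<Sum>z\<in>A. kpow A Q n x z * (Q z y * v y))" .
  qed
  also have "\<dots> = (\<Sum>z\<in>A. \<Sum>y\<in>A. kpow A Q n x z * (Q z y * v y))"
    by (rule sum.swap)
  also have "\<dots> = pv A Q (Qv A Q v) x n"
    unfolding pv_def Qv_def by (simp add: sum_distrib_left)
  finally show ?thesis .
qed

lemma ev_deriv:
  assumes A: "finite A"
  shows "((\<lambda>t. ev A Q t v x) has_real_derivative ev A Q t (Qv A Q v) x) (at t)"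
proof -
  define c where "c k = pv A Q v x k / fact k" for k
  have "((\<lambda>t. \<Sum>n. c n * t^n) has_field_derivative (\<Sum>n. diffs c n * t^n)) (at t)"
    by (rule termdiffs_strong_converges_everywhere) (use pv_summable[OF A] in \<open>simp add: c_def\<close>)
  moreover have "(\<lambda>t. \<Sum>n. c n * t^n) = (\<lambda>t. ev A Q t v x)"
    by (simp add: ev_series[OF A] c_def)
  moreover have "diffs c n = pv A Q (Qv A Q v) x n / fact n" for n
    unfolding diffs_def c_def pv_Suc[OF A] by (simp add: fact_Suc del: of_nat_Suc)
  ultimately show ?thesis by (simp add: ev_series[OF A])
qed

lemma ev_zero:
  assumes A: "finite A" and x: "x \<in> A"
  shows "ev A Q 0 v x = v x"
proof -
  have "ev A Q 0 v x = pv A Q v x 0"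
    unfolding ev_series[OF A] using powser_zero[of "\<lambda>k. pv A Q v x k / fact k"] by simp
  also have "\<dots> = (\<Sum>y\<in>A. if y = x then v x else 0)"
    unfolding pv_def by (intro sum.cong refl) (use x in auto)
  finally show ?thesis using A x by simp
qed

lemma ev_outside:
  assumes "x \<notin> A"
  shows "ev A Q t v x = 0"
  using assms by (simp add: ev_def Ek_def kpow_outL)

lemma key_bound:
  assumes A: "finite A"
    and Qoff: "\<And>x y. x \<in> A \<Longrightarrow> y \<in> A \<Longrightarrow> x \<noteq> y \<Longrightarrow> 0 \<le> Q x y"
    and g0: "\<And>x. x \<in> A \<Longrightarrow> 0 \<le> g x"
    and gQ: "\<And>x. x \<in> A \<Longrightarrow> Qv A Q g x \<le> -1"
    and Q1: "\<And>x. x \<in> A \<Longrightarrow> Qv A Q (\<lambda>_. 1) x \<le> 0"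
    and T: "0 \<le> T" and x: "x \<in> A"
  shows "T * ev A Q T (\<lambda>_. 1) x \<le> g x"
proof -
  define F where "F t = ev A Q t g x + t * ev A Q t (\<lambda>_. 1) x" for t
  have "F T \<le> F 0"
  proof (rule DERIV_nonpos_imp_nonincreasing[OF T])
    fix t assume t: "0 \<le> t" "t \<le> T"
    have D: "(F has_real_derivative
       ev A Q t (Qv A Q g) x + (1 * ev A Q t (\<lambda>_. 1) x + ev A Q t (Qv A Q (\<lambda>_. 1)) x * t)) (at t)"
      unfolding F_def by (intro DERIV_add DERIV_mult DERIV_ident ev_deriv[OF A])
    have "ev A Q t (Qv A Q g) x + (1 * ev A Q t (\<lambda>_. 1) x + ev A Q t (Qv A Q (\<lambda>_. 1)) x * t)
        = (\<Sum>y\<in>A. Ek A Q t x y * (Qv A Q g y + 1 + t * Qv A Q (\<lambda>_. 1) y))"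
      unfolding ev_def by (simp add: sum.distrib sum_distrib_left distrib_left mult_ac)
    also have "\<dots> \<le> 0"
    proof (intro sum_nonpos)
      fix y assume y: "y \<in> A"
      have "Qv A Q g y + 1 + t * Qv A Q (\<lambda>_. 1) y \<le> 0"
        using gQ[OF y] Q1[OF y] t(1) by (smt (verit) mult_nonneg_nonpos)
      then show "Ek A Q t x y * (Qv A Q g y + 1 + t * Qv A Q (\<lambda>_. 1) y) \<le> 0"
        using E_nonneg[OF A Qoff t(1)] by (simp add: mult_nonneg_nonpos)
    qed
    finally show "\<exists>y. (F has_real_derivative y) (at t) \<and> y \<le> 0" using D by blast
  qed
  moreover have "F 0 = g x" unfolding F_def using ev_zero[OF A x] by simp
  moreover have "0 \<le> ev A Q T g x"
    unfolding ev_def using E_nonneg[OF A Qoff T] g0 by (auto intro!: sum_nonneg)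
  ultimately show ?thesis unfolding F_def by simp
qed

lemma ev_add:
  assumes A: "finite A"
  shows "ev A Q (s + t) v x = (\<Sum>y\<in>A. Ek A Q s x y * ev A Q t v y)"
proof -
  have "ev A Q (s + t) v x = (\<Sum>w\<in>A. \<Sum>y\<in>A. Ek A Q s x y * Ek A Q t y w * v w)"
    unfolding ev_def E_add[OF A] by (simp add: sum_distrib_right)
  also have "\<dots> = (\<Sum>y\<in>A. \<Sum>w\<in>A. Ek A Q s x y * Ek A Q t y w * v w)"
    by (rule sum.swap)
  finally show ?thesis unfolding ev_def by (simp add: sum_distrib_left mult_ac)
qed

lemma abstract_main:
  assumes A: "finite A"
    and Qoff: "\<And>x y. x \<in> A \<Longrightarrow> y \<in> A \<Longrightarrow> x \<noteq> y \<Longrightarrow> 0 \<le> Q x y"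
    and g0: "\<And>x. x \<in> A \<Longrightarrow> 0 \<le> g x"
    and gG: "\<And>x. x \<in> A \<Longrightarrow> g x \<le> G"
    and gQ: "\<And>x. x \<in> A \<Longrightarrow> Qv A Q g x \<le> -1"
    and Q1: "\<And>x. x \<in> A \<Longrightarrow> Qv A Q (\<lambda>_. 1) x \<le> 0"
    and T: "0 < T" and GT: "2 * G \<le> T"
  shows "ev A Q (real n * T) (\<lambda>_. 1) x \<le> 1 / 2 ^ n"
proof -
  have half: "ev A Q T (\<lambda>_. 1) y \<le> 1/2" if y: "y \<in> A" for y
  proof -
    have "T * ev A Q T (\<lambda>_. 1) y \<le> T / 2"
    proof -
      have "T * ev A Q T (\<lambda>_. 1) y \<le> g y"
        by (rule key_bound[OF A]) (use Qoff g0 gQ Q1 T y in auto)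
      then show ?thesis using gG[OF y] GT by linarith
    qed
    then show ?thesis using T by simp
  qed
  show ?thesis
  proof (induction n arbitrary: x)
    case 0
    show ?case
      by (cases "x \<in> A") (auto simp: ev_zero[OF A] ev_outside)
  next
    case (Suc n)
    have "ev A Q (real (Suc n) * T) (\<lambda>_. 1) x = (\<Sum>y\<in>A. Ek A Q (real n * T) x y * ev A Q T (\<lambda>_. 1) y)"
    proof -
      have e: "real (Suc n) * T = real n * T + T" by (simp add: algebra_simps)
      show ?thesis by (simp only: e ev_add[OF A])
    qed
    also have "\<dots> \<le> (\<Sum>y\<in>A. Ek A Q (real n * T) x y * (1/2))"
      by (intro sum_mono mult_left_mono half E_nonneg[OF A Qoff]) (use T in auto)
    also have "\<dots> = ev A Q (real n * T) (\<lambda>_. 1) x / 2"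
      unfolding ev_def by (simp add: sum_divide_distrib)
    also have "\<dots> \<le> 1 / 2 ^ Suc n" using Suc.IH[of x] by simp
    finally show ?case .
  qed
qed



lemma diameter_pair: "diameter {p, q} = dist p (q::complex)"
proof (rule order_antisym)
  show "diameter {p, q} \<le> dist p q"
    by (rule diameter_le) (auto simp: dist_norm norm_minus_commute)
  show "dist p q \<le> diameter {p, q}"
    by (rule diameter_bounded_bound) auto
qed

lemma rate_sum:
  fixes x d :: complex
  assumes d: "d \<noteq> 0" and a: "0 < \<alpha>" and b: "0 < \<beta>"
  defines "p \<equiv> x - of_real \<alpha> * d" and "q \<equiv> x + of_real \<beta> * d"
  shows "1 / (cmod (p - x) * dist q p) * ((cmod p)\<^sup>2 - (cmod x)\<^sup>2)
       + 1 / (cmod (q - x) * dist q p) * ((cmod q)\<^sup>2 - (cmod x)\<^sup>2) = 1"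
proof -
  have np: "cmod (p - x) = \<alpha> * cmod d" using a by (simp add: p_def norm_mult)
  have nq: "cmod (q - x) = \<beta> * cmod d" using b by (simp add: q_def norm_mult)
  have qp: "q - p = of_real (\<alpha> + \<beta>) * d" by (simp add: p_def q_def algebra_simps)
  have dqp: "dist q p = (\<alpha> + \<beta>) * cmod d" using a b by (simp add: dist_norm qp norm_mult del: of_real_add)
  have ip: "(cmod p)\<^sup>2 - (cmod x)\<^sup>2 = - 2 * \<alpha> * inner x d + \<alpha>\<^sup>2 * (cmod d)\<^sup>2"
    unfolding p_def power2_norm_eq_inner scaleR_conv_of_real[symmetric]
    by (simp add: inner_diff_left inner_diff_right inner_commute power2_eq_square algebra_simps)
  have iq: "(cmod q)\<^sup>2 - (cmod x)\<^sup>2 = 2 * \<beta> * inner x d + \<beta>\<^sup>2 * (cmod d)\<^sup>2"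
    unfolding q_def power2_norm_eq_inner scaleR_conv_of_real[symmetric]
    by (simp add: inner_add_left inner_add_right inner_commute power2_eq_square algebra_simps)
  have nd: "cmod d > 0" using d by simp
  define D where "D = cmod d"
  define k where "k = inner x d"
  have D: "D > 0" using nd by (simp add: D_def)
  have ab: "\<alpha> + \<beta> > 0" using a b by simp
  have e1: "1 / (\<alpha> * D * ((\<alpha> + \<beta>) * D)) * (- 2 * \<alpha> * k + \<alpha>\<^sup>2 * D\<^sup>2) = (\<alpha> * D\<^sup>2 - 2 * k) / ((\<alpha> + \<beta>) * D\<^sup>2)"
  proof -
    have "\<alpha> \<noteq> 0" "D \<noteq> 0" "\<alpha> + \<beta> \<noteq> 0" using a D ab by auto
    then show ?thesis by (simp add: divide_simps power2_eq_square) (simp add: algebra_simps)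
  qed
  have e2: "1 / (\<beta> * D * ((\<alpha> + \<beta>) * D)) * (2 * \<beta> * k + \<beta>\<^sup>2 * D\<^sup>2) = (\<beta> * D\<^sup>2 + 2 * k) / ((\<alpha> + \<beta>) * D\<^sup>2)"
  proof -
    have "\<beta> \<noteq> 0" "D \<noteq> 0" "\<alpha> + \<beta> \<noteq> 0" using b D ab by auto
    then show ?thesis by (simp add: divide_simps power2_eq_square) (simp add: algebra_simps)
  qed
  have e3: "(\<alpha> * D\<^sup>2 - 2 * k) / ((\<alpha> + \<beta>) * D\<^sup>2) + (\<beta> * D\<^sup>2 + 2 * k) / ((\<alpha> + \<beta>) * D\<^sup>2) = 1"
  proof -
    have "(\<alpha> + \<beta>) * D\<^sup>2 \<noteq> 0" using D ab by simp
    then show ?thesis by (simp only: add_divide_distrib[symmetric]) (simp add: algebra_simps)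
  qed
  show ?thesis unfolding np nq dqp ip iq D_def[symmetric] k_def[symmetric] e1 e2 e3 ..
qed

lemma seg_param:
  fixes a d :: complex
  assumes d: "d \<noteq> 0"
  shows "open_segment (a + of_real s * d) (a + of_real s' * d) = (\<lambda>w. a + of_real w * d) ` open_segment s s'"
proof -
  have lin: "linear (\<lambda>w::real. of_real w * d)"
    using bounded_linear_scaleR_left[of d] by (simp add: scaleR_conv_of_real bounded_linear.linear)
  have inj: "inj (\<lambda>w::real. of_real w * d)" using d by (auto simp: inj_on_def)
  have "open_segment (of_real s * d) (of_real s' * d) = (\<lambda>w. of_real w * d) ` open_segment s s'"
    using open_segment_linear_image[OF lin inj] .
  then show ?thesis
    by (simp add: open_segment_translation image_image)
qed



lemma TG_parts:
  assumes "T_graph Segs Bd"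
  shows "finite Segs" "finite Bd" "\<forall>S\<in>Segs. is_open_seg S"
    "\<forall>x\<in>tvertices Segs Bd - Bd. \<exists>!S. S \<in> Segs \<and> x \<in> S"
proof -
  note t = assms[unfolded T_graph_def]
  show "finite Segs" using t by (rule conjunct1)
  show "finite Bd" using conjunct2[OF t] by (rule conjunct1)
  show "\<forall>S\<in>Segs. is_open_seg S" using conjunct2[OF conjunct2[OF t]] by (rule conjunct1)
  show "\<forall>x\<in>tvertices Segs Bd - Bd. \<exists>!S. S \<in> Segs \<and> x \<in> S"
    using conjunct2[OF conjunct2[OF conjunct2[OF conjunct2[OF conjunct2[OF conjunct2[OF conjunct2[OF t]]]]]]] .
qed

lemma tvertices_finite:
  assumes TG: "T_graph Segs Bd"
  shows "finite (tvertices Segs Bd)"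
proof -
  note fin = TG_parts(1,2)[OF TG]
  note segs = TG_parts(3)[OF TG]
  have "finite (closure S - S)" if SS: "S \<in> Segs" for S
  proof -
    obtain a b where ab: "a \<noteq> b" "S = open_segment a b" using bspec[OF segs SS] unfolding is_open_seg_def by iprover
    have "closure S - S = closed_segment a b - open_segment a b" by (subst ab(2))+ (simp add: ab(1))
    then have "closure S - S \<subseteq> {a, b}" by (auto simp: open_segment_def)
    then show ?thesis by (rule finite_subset) simp
  qed
  then show ?thesis unfolding tvertices_def using fin by auto
qed

lemma nbrs_struct:
  assumes TG: "T_graph Segs Bd" and diam: "\<forall>S\<in>Segs. diameter S \<le> L"
    and x: "x \<in> tvertices Segs Bd" "x \<notin> Bd"
  shows "\<exists>d \<alpha> \<beta>. d \<noteq> 0 \<and> 0 < \<alpha> \<and> 0 < \<beta> \<and>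
           nbrs Segs Bd x = {x - of_real \<alpha> * d, x + of_real \<beta> * d} \<and>
           \<alpha> * cmod d \<le> L \<and> \<beta> * cmod d \<le> L"
proof -
  note segs = TG_parts(3)[OF TG]
  note uniq = TG_parts(4)[OF TG]
  have ex: "\<exists>!S. S \<in> Segs \<and> x \<in> S" using uniq x by simp
  obtain S where S0: "S \<in> Segs \<and> x \<in> S" and Su0: "\<forall>S'. S' \<in> Segs \<and> x \<in> S' \<longrightarrow> S' = S"
    by (rule ex1E[OF ex])
  have S: "S \<in> Segs" "x \<in> S" using S0 by simp_all
  have Su: "\<And>S'. S' \<in> Segs \<Longrightarrow> x \<in> S' \<Longrightarrow> S' = S" using Su0 by simp
  have seg: "seg_of Segs x = S"
    unfolding seg_of_def
  proof (rule the_equality)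
    show "S \<in> Segs \<and> x \<in> S" using S by simp
    fix S' assume "S' \<in> Segs \<and> x \<in> S'"
    then show "S' = S" using Su by blast
  qed
  obtain a b where ab: "a \<noteq> b" "S = open_segment a b"
    using bspec[OF segs S(1)] unfolding is_open_seg_def by iprover
  define V where "V = tvertices Segs Bd"
  have finV: "finite V" unfolding V_def by (rule tvertices_finite[OF TG])
  have clS: "closure S = closed_segment a b" using ab by simp
  have cS: "closure S - S = {a, b}"
  proof -
    have "closure S - S = closed_segment a b - open_segment a b" by (subst clS) (simp add: ab(2))
    also have "\<dots> = {a, b}" by (auto simp: open_segment_def)
    finally show ?thesis .
  qed
  have aV: "a \<in> V" and bV: "b \<in> V" using S cS unfolding V_def tvertices_def by auto
  define d where "d = b - a"
  have d: "d \<noteq> 0" using ab by (simp add: d_def)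
  define \<gamma> where "\<gamma> w = a + of_real w * d" for w :: real
  have inj\<gamma>: "inj \<gamma>" using d by (auto simp: inj_on_def \<gamma>_def)
  obtain s0 where s0: "0 < s0" "s0 < 1" "x = \<gamma> s0"
  proof -
    obtain u where "0 < u" "u < 1" "x = (1 - u) *\<^sub>R a + u *\<^sub>R b"
      using S ab by (auto simp: in_segment)
    moreover have "(1 - u) *\<^sub>R a + u *\<^sub>R b = \<gamma> u"
      by (simp add: \<gamma>_def d_def scaleR_conv_of_real algebra_simps)
    ultimately show ?thesis using that by auto
  qed
  have cseg: "y \<in> closed_segment a b \<longleftrightarrow> (\<exists>w. 0 \<le> w \<and> w \<le> 1 \<and> y = \<gamma> w)" for y
  proof -
    have "(1 - u) *\<^sub>R a + u *\<^sub>R b = \<gamma> u" for u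
      by (simp add: \<gamma>_def d_def scaleR_conv_of_real algebra_simps)
    then show ?thesis by (simp add: in_segment)
  qed
  have os: "open_segment (\<gamma> s) (\<gamma> w) = \<gamma> ` open_segment s w" for s w
    unfolding \<gamma>_def by (rule seg_param[OF d])
  define W where "W = {w. 0 \<le> w \<and> w \<le> 1 \<and> \<gamma> w \<in> V}"
  have finW: "finite W"
    by (rule finite_subset[OF _ finite_vimageI[OF finV inj\<gamma>]]) (auto simp: W_def)
  have "\<gamma> 0 = a" "\<gamma> 1 = b" by (simp_all add: \<gamma>_def d_def)
  then have W01: "0 \<in> W" "1 \<in> W" using aV bV by (auto simp: W_def)
  define Wp where "Wp = {w \<in> W. s0 < w}"
  define Wm where "Wm = {w \<in> W. w < s0}"
  have finWp: "finite Wp" "finite Wm" using finW by (auto simp: Wp_def Wm_def)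
  have neWp: "Wp \<noteq> {}" "Wm \<noteq> {}" using W01 s0 by (auto simp: Wp_def Wm_def)
  define sp where "sp = Min Wp"
  define sm where "sm = Max Wm"
  have sp: "sp \<in> Wp" "\<And>w. w \<in> Wp \<Longrightarrow> sp \<le> w"
    using finWp neWp by (auto simp: sp_def)
  have sm: "sm \<in> Wm" "\<And>w. w \<in> Wm \<Longrightarrow> w \<le> sm"
    using finWp neWp by (auto simp: sm_def)
  have nb: "nbrs Segs Bd x = {y \<in> V \<inter> closed_segment a b. y \<noteq> x \<and> open_segment x y \<inter> V = {}}"
    unfolding nbrs_def seg ab(2) V_def using ab(1) by simp
  have emp: "open_segment x (\<gamma> w) \<inter> V = {} \<longleftrightarrow> (\<forall>v\<in>W. v \<notin> open_segment s0 w)"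
    if w: "0 \<le> w" "w \<le> 1" for w
  proof -
    have "open_segment x (\<gamma> w) = \<gamma> ` open_segment s0 w" using os s0 by simp
    moreover have "v \<in> open_segment s0 w \<Longrightarrow> 0 \<le> v \<and> v \<le> 1" for v
      using w s0 by (auto simp: open_segment_eq_real_ivl split: if_splits)
    ultimately show ?thesis by (auto simp: W_def)
  qed
  have nbeq: "nbrs Segs Bd x = {\<gamma> sm, \<gamma> sp}"
  proof
    show "nbrs Segs Bd x \<subseteq> {\<gamma> sm, \<gamma> sp}"
    proof
      fix y assume y: "y \<in> nbrs Segs Bd x"
      then obtain w where w: "0 \<le> w" "w \<le> 1" "y = \<gamma> w" using nb cseg by auto
      have wW: "w \<in> W" using y w nb by (auto simp: W_def)
      have ws0: "w \<noteq> s0" using y w s0 nb by auto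
      have nob: "\<forall>v\<in>W. v \<notin> open_segment s0 w" using y w nb emp[OF w(1,2)] by auto
      show "y \<in> {\<gamma> sm, \<gamma> sp}"
      proof (cases "s0 < w")
        case True
        then have "w \<in> Wp" using wW by (simp add: Wp_def)
        then have "sp \<le> w" using sp by auto
        moreover have "\<not> sp < w"
        proof
          assume "sp < w"
          then have "sp \<in> open_segment s0 w" using sp(1) True by (auto simp: Wp_def open_segment_eq_real_ivl)
          then show False using nob sp(1) by (auto simp: Wp_def)
        qed
        ultimately show ?thesis using w by auto
      next
        case False
        then have F: "w < s0" using ws0 by simp
        then have "w \<in> Wm" using wW by (simp add: Wm_def)
        then have "w \<le> sm" using sm by auto
        moreover have "\<not> w < sm"
        proof
          assume "w < sm"
          then have "sm \<in> open_segment s0 w" using sm(1) F by (auto simp: Wm_def open_segment_eq_real_ivl)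
          then show False using nob sm(1) by (auto simp: Wm_def)
        qed
        ultimately show ?thesis using w by auto
      qed
    qed
    show "{\<gamma> sm, \<gamma> sp} \<subseteq> nbrs Segs Bd x"
    proof -
      have "\<gamma> sp \<in> nbrs Segs Bd x"
      proof -
        have spW: "sp \<in> W" "s0 < sp" using sp(1) by (auto simp: Wp_def)
        then have r: "0 \<le> sp" "sp \<le> 1" "\<gamma> sp \<in> V" by (auto simp: W_def)
        have "\<gamma> sp \<noteq> x" using inj\<gamma> s0 spW unfolding inj_def by auto
        moreover have "\<forall>v\<in>W. v \<notin> open_segment s0 sp"
        proof (intro ballI notI)
          fix v assume "v \<in> W" "v \<in> open_segment s0 sp"
          then have "v \<in> Wp" "v < sp" using spW by (auto simp: Wp_def open_segment_eq_real_ivl)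
          then show False using sp(2) by force
        qed
        ultimately show ?thesis using nb r cseg emp[OF r(1,2)] by auto
      qed
      moreover have "\<gamma> sm \<in> nbrs Segs Bd x"
      proof -
        have smW: "sm \<in> W" "sm < s0" using sm(1) by (auto simp: Wm_def)
        then have r: "0 \<le> sm" "sm \<le> 1" "\<gamma> sm \<in> V" by (auto simp: W_def)
        have "\<gamma> sm \<noteq> x" using inj\<gamma> s0 smW unfolding inj_def by auto
        moreover have "\<forall>v\<in>W. v \<notin> open_segment s0 sm"
        proof (intro ballI notI)
          fix v assume "v \<in> W" "v \<in> open_segment s0 sm"
          then have "v \<in> Wm" "sm < v" using smW by (auto simp: Wm_def open_segment_eq_real_ivl)
          then show False using sm(2) by force
        qed
        ultimately show ?thesis using nb r cseg emp[OF r(1,2)] by auto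
      qed
      ultimately show ?thesis by auto
    qed
  qed
  have spr: "s0 < sp" "sp \<le> 1" using sp(1) by (auto simp: Wp_def W_def)
  have smr: "sm < s0" "0 \<le> sm" using sm(1) by (auto simp: Wm_def W_def)
  have dL: "cmod d \<le> L"
  proof -
    have "bounded S" using ab by (simp add: bounded_open_segment)
    then have "dist a b \<le> diameter (closure S)"
      using ab by (intro diameter_bounded_bound) (auto simp: bounded_closed_segment)
    also have "\<dots> = diameter S" using \<open>bounded S\<close> by (rule diameter_closure)
    also have "\<dots> \<le> L" using diam S by auto
    finally show ?thesis by (simp add: d_def dist_norm norm_minus_commute)
  qed
  show ?thesis
  proof (intro exI conjI)
    show "d \<noteq> 0" by (rule d)
    show "0 < s0 - sm" "0 < sp - s0" using spr smr by auto
    show "nbrs Segs Bd x = {x - of_real (s0 - sm) * d, x + of_real (sp - s0) * d}"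
    proof -
      have e1: "\<gamma> sm = x - of_real (s0 - sm) * d" unfolding s0(3) \<gamma>_def by (simp add: algebra_simps)
      have e2: "\<gamma> sp = x + of_real (sp - s0) * d" unfolding s0(3) \<gamma>_def by (simp add: algebra_simps)
      show ?thesis unfolding nbeq e1 e2 by (rule refl)
    qed
    have "(s0 - sm) * cmod d \<le> 1 * cmod d" using spr smr s0 by (intro mult_right_mono) auto
    then show "(s0 - sm) * cmod d \<le> L" using dL by simp
    have "(sp - s0) * cmod d \<le> 1 * cmod d" using spr smr s0 by (intro mult_right_mono) auto
    then show "(sp - s0) * cmod d \<le> L" using dL by simp
  qed
qed



lemma jr_facts:
  assumes TG: "T_graph Segs Bd" and diam: "\<forall>S\<in>Segs. diameter S \<le> L"
    and x: "x \<in> tvertices Segs Bd" "x \<notin> Bd"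
  shows "finite (nbrs Segs Bd x)" "x \<notin> nbrs Segs Bd x"
    "\<And>y. 0 \<le> jump_rate Segs Bd x y"
    "\<And>y. y \<notin> nbrs Segs Bd x \<Longrightarrow> jump_rate Segs Bd x y = 0"
    "(\<Sum>z\<in>nbrs Segs Bd x. jump_rate Segs Bd x z * ((cmod z)\<^sup>2 - (cmod x)\<^sup>2)) = 1"
    "\<And>z. z \<in> nbrs Segs Bd x \<Longrightarrow> cmod (z - x) \<le> L"
proof -
  obtain d \<alpha> \<beta> where d: "d \<noteq> 0" and a: "0 < \<alpha>" and b: "0 < \<beta>"
    and N: "nbrs Segs Bd x = {x - of_real \<alpha> * d, x + of_real \<beta> * d}"
    and aL: "\<alpha> * cmod d \<le> L" and bL: "\<beta> * cmod d \<le> L"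
    using nbrs_struct[OF TG diam x] by blast
  define p where "p = x - of_real \<alpha> * d"
  define q where "q = x + of_real \<beta> * d"
  have pq: "p \<noteq> q"
  proof
    assume "p = q"
    then have "of_real (\<alpha> + \<beta>) * d = 0" by (simp add: p_def q_def algebra_simps)
    then show False using a b d by (simp del: of_real_add)
  qed
  have N': "nbrs Segs Bd x = {p, q}" using N by (simp add: p_def q_def)
  show "finite (nbrs Segs Bd x)" unfolding N' by simp
  show xN: "x \<notin> nbrs Segs Bd x" unfolding nbrs_def by simp
  have xin: "x \<in> tvertices Segs Bd - Bd" using x by simp
  have jr: "jump_rate Segs Bd x y = (if y \<in> {p, q} then 1 / (cmod (y - x) * dist p q) else 0)" for y
    unfolding jump_rate_def N' diameter_pair using xin by simp
  show "0 \<le> jump_rate Segs Bd x y" for y unfolding jr by simp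
  show "y \<notin> nbrs Segs Bd x \<Longrightarrow> jump_rate Segs Bd x y = 0" for y unfolding jr N' by simp
  show "(\<Sum>z\<in>nbrs Segs Bd x. jump_rate Segs Bd x z * ((cmod z)\<^sup>2 - (cmod x)\<^sup>2)) = 1"
    unfolding N' using pq rate_sum[OF d a b, of x]
    by (simp add: jr p_def q_def dist_commute)
  show "z \<in> nbrs Segs Bd x \<Longrightarrow> cmod (z - x) \<le> L" for z
    unfolding N' using a b aL bL by (auto simp: p_def q_def norm_mult)
qed

lemma gen_bound:
  assumes TG: "T_graph Segs Bd" and diam: "\<forall>S\<in>Segs. diameter S \<le> L"
    and x: "x \<in> tvertices Segs Bd" "x \<notin> Bd"
    and A: "finite A" "x \<in> A"
    and h: "\<And>z. z \<in> nbrs Segs Bd x \<Longrightarrow> 0 \<le> h z"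
  shows "(\<Sum>z\<in>A. generator Segs Bd x z * h z) \<le> (\<Sum>z\<in>nbrs Segs Bd x. jump_rate Segs Bd x z * (h z - h x))"
proof -
  note J = jr_facts[OF TG diam x]
  define N where "N = nbrs Segs Bd x"
  have "(\<Sum>z\<in>A. generator Segs Bd x z * h z) = generator Segs Bd x x * h x + (\<Sum>z\<in>A - {x}. generator Segs Bd x z * h z)"
    using A by (simp add: sum.remove)
  also have "(\<Sum>z\<in>A - {x}. generator Segs Bd x z * h z) = (\<Sum>z\<in>A - {x}. if z \<in> N then jump_rate Segs Bd x z * h z else 0)"
    by (intro sum.cong refl) (auto simp: generator_def N_def J(4))
  also have "\<dots> = (\<Sum>z\<in>(A - {x}) \<inter> N. jump_rate Segs Bd x z * h z)"
    using A by (simp add: sum.inter_restrict)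
  also have "\<dots> \<le> (\<Sum>z\<in>N. jump_rate Segs Bd x z * h z)"
    by (rule sum_mono2) (use J h in \<open>auto simp: N_def\<close>)
  finally have "(\<Sum>z\<in>A. generator Segs Bd x z * h z) \<le> generator Segs Bd x x * h x + (\<Sum>z\<in>N. jump_rate Segs Bd x z * h z)"
    by simp
  also have "generator Segs Bd x x * h x + (\<Sum>z\<in>N. jump_rate Segs Bd x z * h z) = (\<Sum>z\<in>N. jump_rate Segs Bd x z * (h z - h x))"
    by (simp add: generator_def N_def sum_distrib_right right_diff_distrib sum_subtractf)
  finally show ?thesis unfolding N_def .
qed

theorem lemma2:
  fixes Segs :: "complex set set" and Bd :: "complex set"
    and L r :: real and x0 :: complex and n :: nat
  assumes "T_graph Segs Bd"
    and "\<forall>S\<in>Segs. diameter S \<le> L"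
    and "r \<ge> L"
    and "x0 \<in> tvertices Segs Bd"
    and "x0 \<in> ball 0 r"
    and "n \<ge> 1"
  shows "exit_tail Segs Bd r (18 * real n * r\<^sup>2) x0 \<le> 1 / 2 ^ n"
proof -
  note TG = assms(1) and diam = assms(2)
  define A where "A = alive_set Segs Bd r"
  define Q where "Q = generator Segs Bd"
  define g where "g z = 4 * r\<^sup>2 - (cmod z)\<^sup>2" for z
  have "cmod x0 < r" using assms(5) by simp
  then have r: "0 < r" using norm_ge_zero[of x0] by linarith
  have finA: "finite A"
    unfolding A_def alive_set_def using tvertices_finite[OF TG] by auto
  have Amem: "x \<in> tvertices Segs Bd" "x \<notin> Bd" "cmod x < r" if "x \<in> A" for x
    using that by (auto simp: A_def alive_set_def mem_ball)
  have Qoff: "0 \<le> Q x y" if "x \<in> A" "y \<in> A" "x \<noteq> y" for x y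
    using that jr_facts(3)[OF TG diam Amem(1,2)[OF that(1)]] by (simp add: Q_def generator_def)
  have g0: "0 \<le> g x" if "x \<in> A" for x
  proof -
    have "cmod x < r" using Amem[OF that] by simp
    then have "(cmod x)\<^sup>2 \<le> r\<^sup>2" by (intro power_mono) auto
    then show ?thesis unfolding g_def using zero_le_power2[of r] by linarith
  qed
  have gG: "g x \<le> 4 * r\<^sup>2" for x unfolding g_def by simp
  have gQ: "Qv A Q g x \<le> -1" if x: "x \<in> A" for x
  proof -
    note xx = Amem[OF x]
    note J = jr_facts[OF TG diam xx(1,2)]
    have hz: "0 \<le> g z" if z: "z \<in> nbrs Segs Bd x" for z
    proof -
      have "cmod z \<le> cmod x + cmod (z - x)" by (metis add.commute diff_add_cancel norm_triangle_ineq)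
      also have "\<dots> \<le> 2 * r" using J(6)[OF z] xx(3) assms(3) by simp
      finally have "cmod z \<le> 2 * r" .
      then have "(cmod z)\<^sup>2 \<le> (2 * r)\<^sup>2" by (intro power_mono) auto
      then show ?thesis unfolding g_def by (simp add: power_mult_distrib)
    qed
    have "Qv A Q g x \<le> (\<Sum>z\<in>nbrs Segs Bd x. jump_rate Segs Bd x z * (g z - g x))"
      unfolding Qv_def Q_def by (rule gen_bound[OF TG diam xx(1,2) finA x hz])
    also have "\<dots> = - (\<Sum>z\<in>nbrs Segs Bd x. jump_rate Segs Bd x z * ((cmod z)\<^sup>2 - (cmod x)\<^sup>2))"
      by (simp add: g_def sum_negf[symmetric] algebra_simps)
    also have "\<dots> = -1" using J(5) by simp
    finally show ?thesis .
  qed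
  have Q1: "Qv A Q (\<lambda>_. 1) x \<le> 0" if x: "x \<in> A" for x
  proof -
    note xx = Amem[OF x]
    have "Qv A Q (\<lambda>_. 1) x \<le> (\<Sum>z\<in>nbrs Segs Bd x. jump_rate Segs Bd x z * (1 - 1))"
      unfolding Qv_def Q_def by (rule gen_bound[OF TG diam xx(1,2) finA x]) simp
    then show ?thesis by simp
  qed
  have main: "ev A Q (real n * (18 * r\<^sup>2)) (\<lambda>_. 1) x0 \<le> 1 / 2 ^ n"
    by (rule abstract_main[OF finA Qoff g0 gG gQ Q1]) (use r in auto)
  have "exit_tail Segs Bd r (18 * real n * r\<^sup>2) x0 = ev A Q (real n * (18 * r\<^sup>2)) (\<lambda>_. 1) x0"
    unfolding exit_tail_def ev_def Ek_def A_def Q_def by (simp add: mult_ac)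
  then show ?thesis using main by simp
qed

end
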